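(* Let $B_n$ be the number of bidirectional ballot sequences of length $n$. Then $B_n=O(2^n/n)$.
   Context: A 0-1 sequence of length $n$ is a bidirectional ballot sequence if every nonempty prefix and every nonempty suffix of it contains strictly more 1's than 0's. *)

theory Defs
  imports Main "HOL-Library.Landau_Symbols"
begin

(* A 0-1 sequence is a list of bools: True = 1, False = 0. *)
definition ones :: "bool list \<Rightarrow> nat" where
  "ones xs = length (filter (\<lambda>b. b) xs)"

definition zeros :: "bool list \<Rightarrow> nat" where
  "zeros xs = length (filter (\<lambda>b. \<not> b) xs)"

definition bidirectional_ballot :: "bool list \<Rightarrow> bool" where
  "bidirectional_ballot xs \<longleftrightarrow>
     (\<forall>k. 1 \<le> k \<and> k \<le> length xs \<longrightarrow> zeros (take k xs) < ones (take k xs)) \<and>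
     (\<forall>k. k < length xs \<longrightarrow> zeros (drop k xs) < ones (drop k xs))"

definition B :: "nat \<Rightarrow> nat" where
  "B n = card {xs :: bool list. length xs = n \<and> bidirectional_ballot xs}"

end

theory Submission
  imports Defs
begin

definition ht :: "bool list \<Rightarrow> int" where
  "ht xs = int (ones xs) - int (zeros xs)"

lemma ones_simps[simp]: "ones [] = 0" "ones (b # xs) = (if b then Suc (ones xs) else ones xs)"
  by (auto simp: ones_def)
lemma zeros_simps[simp]: "zeros [] = 0" "zeros (b # xs) = (if b then zeros xs else Suc (zeros xs))"
  by (auto simp: zeros_def)
lemma ones_zeros_len: "ones xs + zeros xs = length xs"
  by (induction xs) auto
lemma ht_simps[simp]: "ht [] = 0" "ht (b # xs) = (if b then ht xs + 1 else ht xs - 1)"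
  by (auto simp: ht_def)
lemma ones_rev[simp]: "ones (rev xs) = ones xs"
  by (simp add: ones_def rev_filter[symmetric])
lemma zeros_rev[simp]: "zeros (rev xs) = zeros xs"
  by (simp add: zeros_def rev_filter[symmetric])

lemma fin_len: "finite {xs::bool list. length xs = k \<and> P xs}"
proof -
  have "{xs::bool list. length xs = k \<and> P xs} \<subseteq> {xs. set xs \<subseteq> UNIV \<and> length xs = k}" by auto
  moreover have "finite {xs::bool list. set xs \<subseteq> UNIV \<and> length xs = k}"
    by (rule finite_lists_length_eq) simp
  ultimately show ?thesis by (rule finite_subset)
qed

lemma card_cons:
  "card {xs::bool list. length xs = Suc k \<and> P xs} =
   card {ys. length ys = k \<and> P (True # ys)} + card {ys. length ys = k \<and> P (False # ys)}"
proof -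
  have e: "{xs::bool list. length xs = Suc k \<and> P xs} =
     Cons True ` {ys. length ys = k \<and> P (True # ys)} \<union> Cons False ` {ys. length ys = k \<and> P (False # ys)}"
  proof (rule set_eqI, rule iffI)
    fix xs assume "xs \<in> {xs::bool list. length xs = Suc k \<and> P xs}"
    then obtain b ys where "xs = b # ys" "length ys = k" "P xs" by (cases xs) auto
    then show "xs \<in> Cons True ` {ys. length ys = k \<and> P (True # ys)} \<union> Cons False ` {ys. length ys = k \<and> P (False # ys)}"
      by (cases b) auto
  qed auto
  show ?thesis unfolding e
    by (subst card_Un_disjoint) (auto simp: fin_len card_image)
qed

lemma card_ones: "card {xs::bool list. length xs = k \<and> ones xs = i} = k choose i"
proof (induction k arbitrary: i)
  case 0
  have "{xs::bool list. length xs = 0 \<and> ones xs = i} = (if i = 0 then {[]} else {})" by auto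
  then show ?case by simp
next
  case (Suc k)
  show ?case
  proof (cases i)
    case 0
    then show ?thesis using Suc[of 0] by (simp add: card_cons)
  next
    case (Suc j)
    then show ?thesis using Suc.IH[of j] Suc.IH[of "Suc j"] by (simp add: card_cons)
  qed
qed

definition Q :: "nat \<Rightarrow> int \<Rightarrow> nat" where
  "Q k a = card {xs::bool list. length xs = k \<and> ht xs \<le> a}"

lemma Q_Suc: "Q (Suc k) a = Q k (a - 1) + Q k (a + 1)"
  unfolding Q_def by (subst card_cons) (simp add: algebra_simps)

lemma Q_0: "Q 0 a = (if 0 \<le> a then 1 else 0)"
proof -
  have "{xs::bool list. length xs = 0 \<and> ht xs \<le> a} = (if 0 \<le> a then {[]} else {})" by auto
  then show ?thesis unfolding Q_def by simp
qed

definition S :: "nat \<Rightarrow> int \<Rightarrow> bool list set" where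
  "S k c = {xs. length xs = k \<and> (\<forall>j\<le>k. 0 < c + ht (take j xs))}"

lemma all_take_cons:
  "(\<forall>j\<le>Suc k. R (take j (b # ys))) \<longleftrightarrow> R [] \<and> (\<forall>j\<le>k. R (b # take j ys))"
proof
  assume a: "\<forall>j\<le>Suc k. R (take j (b # ys))"
  show "R [] \<and> (\<forall>j\<le>k. R (b # take j ys))"
  proof
    show "R []" using a[rule_format, of 0] by simp
    show "\<forall>j\<le>k. R (b # take j ys)"
      using a by (metis Suc_le_mono take_Suc_Cons)
  qed
next
  assume a: "R [] \<and> (\<forall>j\<le>k. R (b # take j ys))"
  show "\<forall>j\<le>Suc k. R (take j (b # ys))"
  proof (intro allI impI)
    fix j assume "j \<le> Suc k"
    then show "R (take j (b # ys))" using a by (cases j) auto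
  qed
qed

lemma card_S: "0 \<le> c \<Longrightarrow> int (card (S k c)) = int (Q k c) - int (Q k (-c))"
proof (induction k arbitrary: c)
  case 0
  show ?case
  proof (cases "c = 0")
    case True
    have "S 0 c = {}" using True by (auto simp: S_def)
    then show ?thesis using True by simp
  next
    case False
    have "S 0 c = {[]}" using False 0 by (auto simp: S_def)
    then show ?thesis using False 0 by (simp add: Q_0)
  qed
next
  case (Suc k)
  show ?case
  proof (cases "c = 0")
    case True
    have "S (Suc k) c = {}" using True by (auto simp: S_def)
    then show ?thesis using True by simp
  next
    case False
    have "card (S (Suc k) c) = card (S k (c + 1)) + card (S k (c - 1))"
    proof -
      have e: "\<And>b. {ys. length ys = k \<and> (\<forall>j\<le>Suc k. 0 < c + ht (take j (b # ys)))}
          = {ys. length ys = k \<and> (\<forall>j\<le>k. 0 < (if b then c + 1 else c - 1) + ht (take j ys))}"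
        using False Suc.prems
        by (subst all_take_cons[where R="\<lambda>zs. 0 < c + ht zs"]) (auto simp: algebra_simps)
      show ?thesis unfolding S_def by (subst card_cons) (simp only: e, simp)
    qed
    moreover have "Q (Suc k) c = Q k (c-1) + Q k (c+1)" by (simp add: Q_Suc)
    moreover have "Q (Suc k) (-c) = Q k (-(c+1)) + Q k (-(c - 1))"
    proof -
      have "-c - 1 = -(c+1)" "-c + 1 = -(c - 1)" by simp_all
      then show ?thesis by (simp only: Q_Suc)
    qed
    moreover have "int (card (S k (c + 1))) = int (Q k (c+1)) - int (Q k (-(c+1)))"
      using Suc.IH[of "c+1"] Suc.prems by simp
    moreover have "int (card (S k (c - 1))) = int (Q k (c - 1)) - int (Q k (-(c - 1)))"
      using Suc.IH[of "c - 1"] Suc.prems False by simp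
    ultimately show ?thesis by simp
  qed
qed


lemma card_S1: "card (S k 1) = k choose ((k+1) div 2)"
proof -
  have ht_eq: "length xs = k \<Longrightarrow> ht xs = 2 * int (ones xs) - int k" for xs
    using ones_zeros_len[of xs] by (simp add: ht_def)
  have e: "{xs::bool list. length xs = k \<and> ht xs \<le> 1} =
       {xs. length xs = k \<and> ht xs \<le> -1} \<union> {xs. length xs = k \<and> ones xs = (k+1) div 2}"
    using ht_eq by auto
  have "Q k 1 = Q k (-1) + card {xs::bool list. length xs = k \<and> ones xs = (k+1) div 2}"
    unfolding Q_def e
    by (subst card_Un_disjoint) (auto simp: fin_len ht_eq)
  then show ?thesis using card_S[of 1 k] card_ones by simp
qed

definition pos :: "nat \<Rightarrow> bool list set" where
  "pos k = {xs. length xs = k \<and> (\<forall>j. 1 \<le> j \<and> j \<le> k \<longrightarrow> zeros (take j xs) < ones (take j xs))}"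

lemma pos_sub: "pos k \<subseteq> S k 1"
proof
  fix xs assume a: "xs \<in> pos k"
  have "0 < 1 + ht (take j xs)" if "j \<le> k" for j
  proof (cases "j = 0")
    case True then show ?thesis by simp
  next
    case False
    then have "zeros (take j xs) < ones (take j xs)" using a that by (auto simp: pos_def)
    then show ?thesis by (simp add: ht_def)
  qed
  then show "xs \<in> S k 1" using a by (auto simp: S_def pos_def)
qed

lemma card_pos: "card (pos k) \<le> k choose (k div 2)"
proof -
  have "card (pos k) \<le> card (S k 1)"
    by (rule card_mono[OF _ pos_sub]) (simp add: S_def fin_len)
  also have "\<dots> \<le> k choose (k div 2)" by (simp add: card_S1 binomial_maximum)
  finally show ?thesis .
qed

lemma B_le: "m \<le> n \<Longrightarrow> B n \<le> card (pos m) * card (pos (n - m))"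
proof -
  assume mn: "m \<le> n"
  let ?A = "{xs :: bool list. length xs = n \<and> bidirectional_ballot xs}"
  let ?f = "\<lambda>xs::bool list. (take m xs, rev (drop m xs))"
  have inj: "inj_on ?f ?A"
    by (rule inj_onI) (metis append_take_drop_id prod.inject rev_rev_ident)
  have img: "?f ` ?A \<subseteq> pos m \<times> pos (n - m)"
  proof
    fix p assume "p \<in> ?f ` ?A"
    then obtain xs where xs: "length xs = n" "bidirectional_ballot xs" and p: "p = ?f xs" by auto
    have 1: "take m xs \<in> pos m"
      using xs mn unfolding pos_def bidirectional_ballot_def by (auto simp: min_def)
    have "zeros (take j (rev (drop m xs))) < ones (take j (rev (drop m xs)))"
      if j: "1 \<le> j" "j \<le> n - m" for j
    proof -
      have "take j (rev (drop m xs)) = rev (drop (n - j) xs)"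
        using xs j mn by (simp add: take_rev add.commute)
      moreover have "n - j < length xs" using j xs by simp
      ultimately show ?thesis using xs(2) unfolding bidirectional_ballot_def by simp
    qed
    then have 2: "rev (drop m xs) \<in> pos (n - m)" using xs by (simp add: pos_def)
    show "p \<in> pos m \<times> pos (n - m)" using 1 2 p by simp
  qed
  have "B n = card ?A" by (simp add: B_def)
  also have "\<dots> \<le> card (pos m \<times> pos (n - m))"
    by (rule card_inj_on_le[OF inj img]) (auto simp: pos_def fin_len)
  also have "\<dots> = card (pos m) * card (pos (n - m))" by (simp add: card_cartesian_product)
  finally show ?thesis .
qed


lemma binom_rel:
  "(2*(Suc m)) choose (Suc m) = 2 * ((2*m+1) choose m)"
  "(m+1) * ((2*m+1) choose m) = (2*m+1) * ((2*m) choose m)"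
proof -
  have o: "(2*m+1) choose (Suc m) = (2*m+1) choose m"
    using central_binomial_odd[of "2*m+1"] by simp
  have a: "Suc m * (Suc (2*m+1) choose Suc m) = Suc (2*m+1) * ((2*m+1) choose m)"
    by (rule Suc_times_binomial)
  have b: "Suc m * (Suc (2*m) choose Suc m) = Suc (2*m) * ((2*m) choose m)"
    by (rule Suc_times_binomial)
  from a have "Suc m * (2*(Suc m) choose Suc m) = Suc m * (2 * ((2*m+1) choose m))" by simp
  then show "(2*(Suc m)) choose (Suc m) = 2 * ((2*m+1) choose m)"
    by (subst (asm) mult_left_cancel) simp_all
  from b o show "(m+1) * ((2*m+1) choose m) = (2*m+1) * ((2*m) choose m)" by simp
qed

lemma y_bound:
  assumes x: "real ((2*m) choose m)^2 * (2*m+1) \<le> 16^m"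
  shows "real ((2*m+1) choose m)^2 * (2*m+3) \<le> 4 * 16^m"
proof -
  define X where "X = real ((2*m) choose m)"
  define Y where "Y = real ((2*m+1) choose m)"
  have r: "(real m + 1) * Y = (2 * real m + 1) * X"
    using binom_rel(2)[of m] unfolding X_def Y_def by (metis of_nat_1 of_nat_add of_nat_mult of_nat_numeral)
  have c: "real (2*m+1) = 2 * real m + 1" by simp
  have x': "X^2 * (2 * real m + 1) \<le> 16^m" using x unfolding X_def c .
  have "(real m + 1)^2 * (Y^2 * (2*real m+3)) = ((2 * real m + 1) * X)^2 * (2*real m+3)"
    by (subst r[symmetric]) (simp add: power_mult_distrib)
  also have "\<dots> = (X^2 * (2 * real m + 1)) * ((2 * real m + 1) * (2*real m+3))"
    by (simp add: power_mult_distrib power2_eq_square)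
  also have "\<dots> \<le> 16^m * ((2 * real m + 1) * (2*real m+3))"
    by (rule mult_right_mono[OF x']) simp
  also have "\<dots> \<le> 16^m * ((real m + 1)^2 * 4)"
    by (rule mult_left_mono) (simp_all add: power2_eq_square algebra_simps)
  also have "\<dots> = (real m + 1)^2 * (4 * 16^m)" by simp
  finally have "(real m + 1)^2 * (Y^2 * (2*real m+3)) \<le> (real m + 1)^2 * (4 * 16^m)" .
  then have "Y^2 * (2*real m+3) \<le> 4 * 16^m"
    by (rule mult_left_le_imp_le) simp
  then show ?thesis unfolding Y_def by simp
qed

lemma x_bound: "real ((2*m) choose m)^2 * (2*m+1) \<le> 16^m"
proof (induction m)
  case 0 then show ?case by simp
next
  case (Suc m)
  have y: "real ((2*m+1) choose m)^2 * (2*m+3) \<le> 4 * 16^m" by (rule y_bound[OF Suc.IH])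
  define Y where "Y = real ((2*m+1) choose m)"
  have e: "real ((2*(Suc m)) choose (Suc m)) = 2 * Y"
    unfolding Y_def by (subst binom_rel(1)) simp
  have "real ((2*(Suc m)) choose (Suc m))^2 * (2*(Suc m)+1) = 4 * (real ((2*m+1) choose m)^2 * (2*m+3))"
    unfolding e by (simp add: Y_def power_mult_distrib algebra_simps)
  also have "\<dots> \<le> 4 * (4 * 16^m)" by (rule mult_left_mono[OF y]) simp
  also have "\<dots> = 16^(Suc m)" by simp
  finally show ?case .
qed

lemma c_bound: "real (k choose (k div 2))^2 * (k+1) \<le> 4^k"
proof (cases "even k")
  case True
  then obtain m where k: "k = 2*m" by blast
  have "(4::real)^k = 16^m" by (simp add: k power_mult)
  then show ?thesis using x_bound[of m] by (simp add: k)
next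
  case False
  then obtain m where k: "k = 2*m+1" using oddE by blast
  have "(4::real)^k = 4 * 16^m" by (simp add: k power_mult)
  moreover have "k div 2 = m" using k by simp
  moreover have "real ((2*m+1) choose m)^2 * (2*real m+2) \<le> real ((2*m+1) choose m)^2 * (2*real m+3)"
    by (rule mult_left_mono) simp_all
  moreover have "real ((2*m+1) choose m)^2 * (2*real m+3) \<le> 4 * 16^m"
    using y_bound[OF x_bound[of m]] by simp
  ultimately have "real ((2*m+1) choose m)^2 * (2*real m+2) \<le> 4 * 16^m" by linarith
  moreover have "real (k choose (k div 2))^2 * real (k+1) = real ((2*m+1) choose m)^2 * (2*real m+2)"
    unfolding \<open>k div 2 = m\<close> unfolding k by simp
  ultimately show ?thesis using \<open>(4::real)^k = 4 * 16^m\<close> by linarith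
qed

lemma pos_bound: "real (card (pos k))^2 * (k+1) \<le> 4^k"
proof -
  have "real (card (pos k))^2 * (k+1) \<le> real (k choose (k div 2))^2 * (k+1)"
  proof (rule mult_right_mono)
    show "real (card (pos k))^2 \<le> real (k choose (k div 2))^2"
      by (rule power_mono) (simp_all add: card_pos)
  qed simp
  then show ?thesis by (rule order_trans) (rule c_bound)
qed

lemma B_bound:
  assumes "n \<ge> 1"
  shows "real (B n) \<le> 2 * (2^n / real n)"
proof -
  define m where "m = n div 2"
  define a where "a = real (card (pos m))"
  define b where "b = real (card (pos (n - m)))"
  have Bab: "real (B n) \<le> a * b"
    using B_le[of m n] unfolding a_def b_def m_def by (metis div_le_dividend of_nat_le_iff of_nat_mult)
  have a: "a^2 \<le> 4^m / (real m + 1)"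
    using pos_bound[of m] unfolding a_def by (simp add: field_simps)
  have b: "b^2 \<le> 4^(n-m) / (real (n - m) + 1)"
    using pos_bound[of "n-m"] unfolding b_def by (simp add: field_simps)
  have mn: "m \<le> n" by (simp add: m_def)
  have key: "real n ^2 \<le> 4 * ((real m + 1) * (real (n - m) + 1))"
  proof (cases "even n")
    case True
    then have "n = 2*m" by (simp add: m_def)
    then have "real (n - m) = real m" "real n = 2 * real m" by simp_all
    then show ?thesis by (simp add: power2_eq_square algebra_simps)
  next
    case False
    then have "n = 2*m+1" by (simp add: m_def)
    then have "real (n - m) = real m + 1" "real n = 2 * real m + 1" by simp_all
    then show ?thesis by (simp add: power2_eq_square algebra_simps)
  qed
  have "real (B n)^2 \<le> (a*b)^2"
    using Bab by (intro power_mono) simp_all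
  also have "\<dots> = a^2 * b^2" by (simp add: power_mult_distrib)
  also have "\<dots> \<le> (4^m / (real m + 1)) * (4^(n-m) / (real (n - m) + 1))"
    using a b by (intro mult_mono) simp_all
  also have "\<dots> = 4^n / ((real m + 1) * (real (n - m) + 1))"
    using mn by (simp add: power_add[symmetric])
  also have "\<dots> \<le> 4^n / (real n^2 / 4)"
    using key assms by (intro divide_left_mono) simp_all
  also have "\<dots> = (2 * (2^n / real n))^2"
  proof -
    have a: "(2::real)^n * 2^n = 4^n" by (simp add: power_mult_distrib[symmetric])
    have "(2 * (2^n / real n))^2 = 4 * ((2::real)^n * 2^n) / (real n * real n)"
      by (simp add: power2_eq_square)
    also have "\<dots> = 4 * 4^n / (real n)^2" by (simp only: a power2_eq_square)
    also have "\<dots> = (4::real)^n / (real n^2 / 4)" by simp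
    finally show ?thesis by (rule sym)
  qed
  finally have "real (B n)^2 \<le> (2 * (2^n / real n))^2" .
  moreover have "0 \<le> 2 * (2^n / real n :: real)"
    by (intro mult_nonneg_nonneg divide_nonneg_nonneg) simp_all
  ultimately show ?thesis by (rule power2_le_imp_le)
qed

theorem proposition9:
  shows "(\<lambda>n. real (B n)) \<in> O(\<lambda>n. 2 ^ n / real n)"
proof (rule bigoI[where c = 2])
  show "\<forall>\<^sub>F n in at_top. norm (real (B n)) \<le> 2 * norm (2 ^ n / real n :: real)"
    using eventually_ge_at_top[of "1::nat"]
  proof eventually_elim
    case (elim n)
    have "norm (real (B n)) = real (B n)" by simp
    moreover have "norm (2 ^ n / real n :: real) = 2 ^ n / real n" by simp
    ultimately show ?case using B_bound[OF elim] by simp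
  qed
qed

end
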